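(* Let $d\ge1$ and $m>d/2$, and let $a_1,a_2,a_3>0$. There exist constants $c_1,c_2,c_3,c_4>0$, depending only on $a_1,a_2,a_3,m,d$, such that for all $\lambda>0$, all nonnegative $P,Q,s,t$ and every positive integer $n$: if $$P^2+a_1\lambda Q^2\le a_2s\lambda P+a_3tn^{-1/2}P^{1-\frac{d}{2m}}Q^{\frac{d}{2m}},$$ then $$P\le c_1s\lambda\vee c_2tn^{-1/2}\lambda^{-\frac{d}{4m}},\qquad Q\le c_3s\lambda^{1/2}\vee c_4tn^{-1/2}\lambda^{-\frac{2m+d}{4m}}.$$
   Context: $a\vee b=\max\{a,b\}$. *)

theory Defs
  imports "HOL-Analysis.Analysis"
begin

end

theory Submission
  imports Defs
begin

lemma core:
  fixes th A P Q w :: real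
  assumes th: "0 < th" "th < 1" and A: "A > 0" and PQ: "P \<ge> 0" "Q \<ge> 0" and w: "w \<ge> 0"
    and h1: "P\<^sup>2 \<le> w * (P powr (1 - th) * Q powr th)"
    and h2: "A * Q\<^sup>2 \<le> w * (P powr (1 - th) * Q powr th)"
  shows "P \<le> w * A powr (- th / 2) \<and> Q \<le> w * A powr (- (1 + th) / 2)"
proof (cases "P = 0 \<or> Q = 0")
  case True
  then have "P powr (1 - th) * Q powr th = 0" by auto
  then have "P\<^sup>2 \<le> 0" "A * Q\<^sup>2 \<le> 0" using h1 h2 by auto
  then have "P = 0" "Q = 0" using A
    by (auto simp: zero_less_mult_iff mult_le_0_iff)
  then show ?thesis using w by auto
next
  case False
  then have P: "P > 0" and Q: "Q > 0" using PQ by auto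
  define X where "X = P powr (1 - th) * Q powr th"
  have X: "X > 0" using P Q by (simp add: X_def)
  have wX: "w * X > 0" using h1 P X_def
    by (metis less_le_trans zero_less_power)
  have "P = (P\<^sup>2) powr (1/2)" using P
    by (simp add: powr_half_sqrt)
  then have "P \<le> (w * X) powr (1/2)" using h1 X_def P
    by (metis powr_mono2 zero_le_divide_1_iff zero_le_numeral zero_le_power2 one_le_numeral)
  then have e1: "P powr (1 - th) \<le> ((w * X) powr (1/2)) powr (1 - th)"
    using th P by (intro powr_mono2) auto
  have "Q\<^sup>2 \<le> w * X / A" using h2 A X_def by (simp add: field_simps)
  have "Q = (Q\<^sup>2) powr (1/2)" using Q by (simp add: powr_half_sqrt)
  also have "\<dots> \<le> (w * X / A) powr (1/2)"
    using \<open>Q\<^sup>2 \<le> w * X / A\<close> by (intro powr_mono2) auto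
  finally have "Q powr th \<le> ((w * X / A) powr (1/2)) powr th"
    using th Q by (intro powr_mono2) auto
  with e1 have "X \<le> ((w * X) powr (1/2)) powr (1 - th) * ((w * X / A) powr (1/2)) powr th"
    unfolding X_def using P Q by (intro mult_mono) auto
  also have "\<dots> = (w * X) powr (1/2) * A powr (- th / 2)"
    using wX A
    by (simp add: powr_powr powr_divide powr_minus_divide divide_simps powr_add[symmetric] powr_diff
        algebra_simps)
  finally have Xle: "X \<le> (w * X) powr (1/2) * A powr (- th / 2)" .
  have "X\<^sup>2 \<le> ((w * X) powr (1/2) * A powr (- th / 2))\<^sup>2"
    using Xle X by (intro power_mono) auto
  also have "\<dots> = w * X * A powr (- th)"
  proof -
    have a: "((w * X) powr (1/2))\<^sup>2 = w * X" using wX by (simp add: powr_half_sqrt)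
    have b: "(A powr (- th / 2))\<^sup>2 = A powr (- th)" using A
      by (simp add: power2_eq_square powr_add[symmetric])
    show ?thesis by (simp only: power_mult_distrib a b)
  qed
  finally have "X * X \<le> (w * A powr (- th)) * X" by (simp add: power2_eq_square algebra_simps)
  then have Xb: "X \<le> w * A powr (- th)" using X by simp
  have "P\<^sup>2 \<le> w * (w * A powr (- th))" using h1 Xb w unfolding X_def[symmetric]
    by (meson mult_left_mono order_trans)
  also have "\<dots> = (w * A powr (- th / 2))\<^sup>2"
    using A by (simp add: power2_eq_square powr_add[symmetric])
  finally have r1: "P \<le> w * A powr (- th / 2)"
    by (rule power2_le_imp_le) (simp add: w)
  have "A * Q\<^sup>2 \<le> w * (w * A powr (- th))" using h2 Xb w unfolding X_def[symmetric]
    by (meson mult_left_mono order_trans)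
  then have "Q\<^sup>2 \<le> w * (w * A powr (- th)) / A" using A by (simp add: field_simps)
  also have "\<dots> = (w * A powr (- (1 + th) / 2))\<^sup>2"
  proof -
    have b: "(A powr (- (1 + th) / 2))\<^sup>2 = A powr (- th) * A powr (- 1)"
    proof -
      have "(A powr (- (1 + th) / 2))\<^sup>2 = A powr (- (1 + th) / 2 + - (1 + th) / 2)"
        by (simp only: power2_eq_square powr_add)
      also have "- (1 + th) / 2 + - (1 + th) / 2 = - th + - 1" by simp
      finally show ?thesis by (simp only: powr_add)
    qed
    have c: "A powr (- 1) = 1 / A" using A by (simp add: powr_minus_divide)
    show ?thesis by (simp only: power_mult_distrib b c) (simp add: power2_eq_square)
  qed
  finally have r2: "Q \<le> w * A powr (- (1 + th) / 2)"
    by (rule power2_le_imp_le) (simp add: w)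
  show ?thesis using r1 r2 by auto
qed

theorem lemmaA2:
  fixes d :: nat and m a1 a2 a3 :: real
  assumes "d \<ge> 1" and "m > real d / 2"
    and "a1 > 0" and "a2 > 0" and "a3 > 0"
  shows "\<exists>c1 c2 c3 c4 :: real. c1 > 0 \<and> c2 > 0 \<and> c3 > 0 \<and> c4 > 0 \<and>
    (\<forall>lam P Q s t :: real. \<forall>n :: nat.
      lam > 0 \<longrightarrow> P \<ge> 0 \<longrightarrow> Q \<ge> 0 \<longrightarrow> s \<ge> 0 \<longrightarrow> t \<ge> 0 \<longrightarrow> n \<ge> 1 \<longrightarrow>
      P\<^sup>2 + a1 * lam * Q\<^sup>2 \<le> a2 * s * lam * P
          + a3 * t * real n powr (-1/2) * P powr (1 - real d / (2 * m)) * Q powr (real d / (2 * m))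
      \<longrightarrow> P \<le> max (c1 * s * lam) (c2 * t * real n powr (-1/2) * lam powr (- real d / (4 * m)))
        \<and> Q \<le> max (c3 * s * lam powr (1/2))
                   (c4 * t * real n powr (-1/2) * lam powr (- (2 * m + real d) / (4 * m))))"
proof -
  define th where "th = real d / (2 * m)"
  have m0: "m > 0" using assms(1,2) by simp
  have th0: "0 < th" using assms(1) m0 unfolding th_def by simp
  have th1: "th < 1" using assms(2) m0 unfolding th_def by (simp add: field_simps)
  have e1: "- th / 2 = - real d / (4 * m)" unfolding th_def using m0 by (simp add: field_simps)
  have e2: "- (1 + th) / 2 = - (2 * m + real d) / (4 * m)" unfolding th_def using m0
    by (simp add: field_simps)
  have e3: "1 - real d / (2 * m) = 1 - th" unfolding th_def ..
  have e4: "real d / (2 * m) = th" unfolding th_def ..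
  define c1 where "c1 = 2 * a2"
  define c3 where "c3 = 2 * a2 / sqrt a1"
  define c2 where "c2 = 2 * a3 * a1 powr (- th / 2)"
  define c4 where "c4 = 2 * a3 * a1 powr (- (1 + th) / 2)"
  have pos: "c1 > 0" "c2 > 0" "c3 > 0" "c4 > 0" using assms unfolding c1_def c2_def c3_def c4_def
    by auto
  have main: "P \<le> max (c1 * s * lam) (c2 * t * real n powr (-1/2) * lam powr (- real d / (4 * m)))
        \<and> Q \<le> max (c3 * s * lam powr (1/2))
                   (c4 * t * real n powr (-1/2) * lam powr (- (2 * m + real d) / (4 * m)))"
    if lam: "lam > 0" and P: "P \<ge> 0" and Q: "Q \<ge> 0" and s: "s \<ge> 0" and t: "t \<ge> 0"
      and h: "P\<^sup>2 + a1 * lam * Q\<^sup>2 \<le> a2 * s * lam * P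
          + a3 * t * real n powr (-1/2) * P powr (1 - real d / (2 * m)) * Q powr (real d / (2 * m))"
    for lam P Q s t :: real and n :: nat
  proof -
    define u where "u = t * real n powr (-1/2)"
    define X where "X = P powr (1 - th) * Q powr th"
    have u: "u \<ge> 0" using t by (simp add: u_def)
    have X: "X \<ge> 0" by (simp add: X_def)
    have h': "P\<^sup>2 + a1 * lam * Q\<^sup>2 \<le> a2 * s * lam * P + a3 * u * X"
      using h unfolding e3 e4 u_def X_def by (simp add: mult.assoc)
    have aQ: "a1 * lam * Q\<^sup>2 \<ge> 0" using assms(3) lam by simp
    show ?thesis
    proof (cases "a3 * u * X \<le> a2 * s * lam * P")
      case True
      have hh: "P\<^sup>2 + a1 * lam * Q\<^sup>2 \<le> c1 * s * lam * P" using h' True unfolding c1_def by simp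
      have Pb: "P \<le> c1 * s * lam"
      proof (cases "P = 0")
        case True then show ?thesis using pos s lam by simp
      next
        case False
        then have "P * P \<le> (c1 * s * lam) * P" using hh aQ by (simp add: power2_eq_square algebra_simps)
        then show ?thesis using False P by simp
      qed
      have "a1 * lam * Q\<^sup>2 \<le> c1 * s * lam * P" using hh by (smt (verit) zero_le_power2)
      also have "\<dots> \<le> c1 * s * lam * (c1 * s * lam)"
        using Pb pos s lam by (intro mult_left_mono) auto
      finally have "Q\<^sup>2 \<le> (c1 * s) ^ 2 * lam / a1" using assms(3) lam
        by (simp add: field_simps power2_eq_square)
      also have "\<dots> = (c3 * s * lam powr (1/2))\<^sup>2"
        using assms(3) lam by (simp add: c3_def c1_def powr_half_sqrt power_mult_distrib power_divide)
      finally have "Q \<le> c3 * s * lam powr (1/2)"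
        by (rule power2_le_imp_le) (use pos s in simp)
      then show ?thesis using Pb by (simp add: max.coboundedI1 del: max_def)
    next
      case False
      have h1: "P\<^sup>2 \<le> (2 * a3 * u) * X" using h' False aQ by simp
      have h2: "(a1 * lam) * Q\<^sup>2 \<le> (2 * a3 * u) * X" using h' False zero_le_power2[of P] by linarith
      have w: "2 * a3 * u \<ge> 0" using u assms by simp
      from core[OF th0 th1 _ P Q w h1[unfolded X_def] h2[unfolded X_def]]
      have r: "P \<le> 2 * a3 * u * (a1 * lam) powr (- th / 2)"
        "Q \<le> 2 * a3 * u * (a1 * lam) powr (- (1 + th) / 2)"
        using assms(3) lam by auto
      have "P \<le> c2 * t * real n powr (-1/2) * lam powr (- real d / (4 * m))"
        using r(1) assms(3) lam unfolding c2_def u_def e1[symmetric]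
        by (simp add: powr_mult mult_ac)
      moreover have "Q \<le> c4 * t * real n powr (-1/2) * lam powr (- (2 * m + real d) / (4 * m))"
        using r(2) assms(3) lam unfolding c4_def u_def e2[symmetric]
        by (simp add: powr_mult mult_ac)
      ultimately show ?thesis by (simp add: max.coboundedI2 del: max_def)
    qed
  qed
  show ?thesis
    apply (rule exI[of _ c1], rule exI[of _ c2], rule exI[of _ c3], rule exI[of _ c4])
    using pos main by blast
qed

end
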